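(* Let $k,l\ge1$ with $k\ne l$, $1\le r\le(2k+1)(2l+1)$, and let $\overline{\mathcal{B}}(2k+1,2l+1;r)$ be the set of boards in $\mathcal{B}(2k+1,2l+1;r)$ whose board partition $\begin{pmatrix}\lambda_1&\lambda_2&\lambda_3&\lambda_4\\ \delta_1&\delta_2&\delta_3&\delta_4\end{pmatrix}_c$ satisfies: (i) $\lambda_1\ge\lambda_i$ for all $i>1$; (ii) if $\lambda_1=\lambda_3$ then $\lambda_2\ge\lambda_4$, if in addition $\lambda_2=\lambda_4$ then $\delta_1\ge\delta_3$, and if further $\delta_1=\delta_3$ then $\delta_2\ge\delta_4$; (iii) if $\lambda_1=\lambda_2$ then $\lambda_3\ge\lambda_4$, and if in addition $\lambda_3=\lambda_4$ then $\delta_2\ge\delta_4$; (iv) if $\lambda_1=\lambda_4$ then $\lambda_2\ge\lambda_3$, and if in addition $\lambda_2=\lambda_3$ then $\delta_1\ge\delta_3$. For a board partition of a board in $\overline{\mathcal{B}}(2k+1,2l+1;r)$, let $K\le\langle H,V\rangle$ be the subgroup of symmetries preserving the set of all boards with that board partition. Then: if $\lambda_1=\lambda_2=\lambda_3=\lambda_4$, $\delta_1=\delta_3$, $\delta_2=\delta_4$: $K=\langle H,V\rangle$, index 1; if $\lambda_1=\lambda_3>\lambda_2=\lambda_4$, $\delta_1=\delta_3$, $\delta_2=\delta_4$: $K=\langle R_{180}\rangle$, index 2; if $\lambda_1=\lambda_2$, $\lambda_3=\lambda_4$, $\delta_2=\delta_4$, and (if $\lambda_2=\lambda_3$ then $\delta_1\ne\delta_3$):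 $K=\langle V\rangle$, index 2; if $\lambda_1=\lambda_4$, $\lambda_2=\lambda_3$, $\delta_1=\delta_3$, and (if $\lambda_2=\lambda_3$ then $\delta_2\ne\delta_4$): $K=\langle H\rangle$, index 2; in all other cases $K$ is trivial, index 4.
   Context: A $(2k+1)\times(2l+1)$ grid ($2k+1$ rows numbered top to bottom, $2l+1$ columns left to right); $\mathcal{B}(2k+1,2l+1;r)$ is the set of boards, i.e. subsets of exactly $r$ blocked cells. $\langle H,V\rangle=\{R_0,H,V,R_{180}\}$ acts on boards ($H$: reflection across the horizontal midline; $V$: across the vertical midline; $R_{180}$: 180-degree rotation). Regions: $\Lambda_1$ = rows $1..k$, cols $1..l$; $\Lambda_2$ = rows $1..k$, cols $l+2..2l+1$; $\Lambda_3$ = rows $k+2..2k+1$, cols $l+2..2l+1$; $\Lambda_4$ = rows $k+2..2k+1$, cols $1..l$; $\Delta_1$ = rows $1..k$, col $l+1$; $\Delta_2$ = row $k+1$, cols $l+2..2l+1$; $\Delta_3$ = rows $k+2..2k+1$, col $l+1$; $\Delta_4$ = row $k+1$, cols $1..l$; center cell $(k+1,l+1)$. The board partition $\begin{pmatrix}\lambda_1&\lambda_2&\lambda_3&\lambda_4\\ \delta_1&\delta_2&\delta_3&\delta_4\end{pmatrix}_c$ records the numbers of blocked cells $\lambda_i$ in $\Lambda_i$, $\delta_i$ in $\Delta_i$, and $c\in\{0,1\}$ at the center. *)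

theory Defs
  imports Main
begin

text \<open>Cells of the (2k+1) x (2l+1) grid are pairs (row, column), rows 1..2k+1 numbered
  top to bottom, columns 1..2l+1 left to right.\<close>

definition grid :: "nat \<Rightarrow> nat \<Rightarrow> (nat \<times> nat) set" where
  "grid k l = {1..2*k+1} \<times> {1..2*l+1}"

definition boards :: "nat \<Rightarrow> nat \<Rightarrow> nat \<Rightarrow> (nat \<times> nat) set set" where
  "boards k l r = {B. B \<subseteq> grid k l \<and> card B = r}"

datatype sym = R0 | H | V | R180

definition HV_group :: "sym set" where
  "HV_group = {R0, H, V, R180}"

fun act_cell :: "nat \<Rightarrow> nat \<Rightarrow> sym \<Rightarrow> nat \<times> nat \<Rightarrow> nat \<times> nat" where
  "act_cell k l R0 (i, j) = (i, j)"
| "act_cell k l H (i, j) = (2*k+2-i, j)"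
| "act_cell k l V (i, j) = (i, 2*l+2-j)"
| "act_cell k l R180 (i, j) = (2*k+2-i, 2*l+2-j)"

definition act_board :: "nat \<Rightarrow> nat \<Rightarrow> sym \<Rightarrow> (nat \<times> nat) set \<Rightarrow> (nat \<times> nat) set" where
  "act_board k l g B = act_cell k l g ` B"

datatype region = Lam1 | Lam2 | Lam3 | Lam4 | Del1 | Del2 | Del3 | Del4 | Ctr

fun region_cells :: "nat \<Rightarrow> nat \<Rightarrow> region \<Rightarrow> (nat \<times> nat) set" where
  "region_cells k l Lam1 = {1..k} \<times> {1..l}"
| "region_cells k l Lam2 = {1..k} \<times> {l+2..2*l+1}"
| "region_cells k l Lam3 = {k+2..2*k+1} \<times> {l+2..2*l+1}"
| "region_cells k l Lam4 = {k+2..2*k+1} \<times> {1..l}"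
| "region_cells k l Del1 = {1..k} \<times> {l+1}"
| "region_cells k l Del2 = {k+1} \<times> {l+2..2*l+1}"
| "region_cells k l Del3 = {k+2..2*k+1} \<times> {l+1}"
| "region_cells k l Del4 = {k+1} \<times> {1..l}"
| "region_cells k l Ctr = {(k+1, l+1)}"

definition board_partition :: "nat \<Rightarrow> nat \<Rightarrow> (nat \<times> nat) set \<Rightarrow> region \<Rightarrow> nat" where
  "board_partition k l B R = card (B \<inter> region_cells k l R)"

definition normalized_partition :: "(region \<Rightarrow> nat) \<Rightarrow> bool" where
  "normalized_partition p \<longleftrightarrow>
     (p Lam1 \<ge> p Lam2 \<and> p Lam1 \<ge> p Lam3 \<and> p Lam1 \<ge> p Lam4)
   \<and> (p Lam1 = p Lam3 \<longrightarrow> p Lam2 \<ge> p Lam4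
        \<and> (p Lam2 = p Lam4 \<longrightarrow> p Del1 \<ge> p Del3
             \<and> (p Del1 = p Del3 \<longrightarrow> p Del2 \<ge> p Del4)))
   \<and> (p Lam1 = p Lam2 \<longrightarrow> p Lam3 \<ge> p Lam4
        \<and> (p Lam3 = p Lam4 \<longrightarrow> p Del2 \<ge> p Del4))
   \<and> (p Lam1 = p Lam4 \<longrightarrow> p Lam2 \<ge> p Lam3
        \<and> (p Lam2 = p Lam3 \<longrightarrow> p Del1 \<ge> p Del3))"

definition Bbar :: "nat \<Rightarrow> nat \<Rightarrow> nat \<Rightarrow> (nat \<times> nat) set set" where
  "Bbar k l r = {B \<in> boards k l r. normalized_partition (board_partition k l B)}"

definition boards_with_partition :: "nat \<Rightarrow> nat \<Rightarrow> nat \<Rightarrow> (region \<Rightarrow> nat) \<Rightarrow> (nat \<times> nat) set set" where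
  "boards_with_partition k l r p = {B \<in> boards k l r. board_partition k l B = p}"

definition stab_group :: "nat \<Rightarrow> nat \<Rightarrow> nat \<Rightarrow> (region \<Rightarrow> nat) \<Rightarrow> sym set" where
  "stab_group k l r p = {g \<in> HV_group.
     act_board k l g ` boards_with_partition k l r p = boards_with_partition k l r p}"

definition sym_index :: "sym set \<Rightarrow> nat" where
  "sym_index K = card HV_group div card K"

end

theory Submission
  imports Defs
begin

fun sig :: "sym \<Rightarrow> region \<Rightarrow> region" where
  "sig R0 R = R"
| "sig H R = (case R of Lam1 \<Rightarrow> Lam4 | Lam4 \<Rightarrow> Lam1 | Lam2 \<Rightarrow> Lam3 | Lam3 \<Rightarrow> Lam2
     | Del1 \<Rightarrow> Del3 | Del3 \<Rightarrow> Del1 | Del2 \<Rightarrow> Del2 | Del4 \<Rightarrow> Del4 | Ctr \<Rightarrow> Ctr)"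
| "sig V R = (case R of Lam1 \<Rightarrow> Lam2 | Lam2 \<Rightarrow> Lam1 | Lam3 \<Rightarrow> Lam4 | Lam4 \<Rightarrow> Lam3
     | Del1 \<Rightarrow> Del1 | Del3 \<Rightarrow> Del3 | Del2 \<Rightarrow> Del4 | Del4 \<Rightarrow> Del2 | Ctr \<Rightarrow> Ctr)"
| "sig R180 R = (case R of Lam1 \<Rightarrow> Lam3 | Lam3 \<Rightarrow> Lam1 | Lam2 \<Rightarrow> Lam4 | Lam4 \<Rightarrow> Lam2
     | Del1 \<Rightarrow> Del3 | Del3 \<Rightarrow> Del1 | Del2 \<Rightarrow> Del4 | Del4 \<Rightarrow> Del2 | Ctr \<Rightarrow> Ctr)"

lemma act_grid: "x \<in> grid k l \<Longrightarrow> act_cell k l g x \<in> grid k l"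
  by (cases x; cases g) (auto simp: grid_def)

lemma act_invol: "x \<in> grid k l \<Longrightarrow> act_cell k l g (act_cell k l g x) = x"
  by (cases x; cases g) (auto simp: grid_def)

lemma act_region: "x \<in> grid k l \<Longrightarrow>
   (act_cell k l g x \<in> region_cells k l R) = (x \<in> region_cells k l (sig g R))"
  by (cases x; cases g; cases R) (auto simp: grid_def)

lemma inj_act: "inj_on (act_cell k l g) (grid k l)"
  by (metis act_invol inj_onI)

lemma bp_act:
  assumes "B \<subseteq> grid k l"
  shows "board_partition k l (act_board k l g B) = (\<lambda>R. board_partition k l B (sig g R))"
proof
  fix R
  have "act_board k l g B \<inter> region_cells k l R = act_cell k l g ` (B \<inter> region_cells k l (sig g R))"
    using assms act_region unfolding act_board_def by blast
  moreover have "inj_on (act_cell k l g) (B \<inter> region_cells k l (sig g R))"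
    using inj_act assms by (meson inj_on_subset le_infI1)
  ultimately show "board_partition k l (act_board k l g B) R = board_partition k l B (sig g R)"
    unfolding board_partition_def by (simp add: card_image)
qed

lemma act_boards: "C \<in> boards k l r \<Longrightarrow> act_board k l g C \<in> boards k l r"
proof -
  assume c: "C \<in> boards k l r"
  hence sub: "C \<subseteq> grid k l" and cc: "card C = r" by (auto simp: boards_def)
  have "inj_on (act_cell k l g) C" using inj_on_subset[OF inj_act sub] .
  hence "card (act_board k l g C) = r" using cc by (simp add: act_board_def card_image)
  moreover have "act_board k l g C \<subseteq> grid k l" using sub act_grid unfolding act_board_def by blast
  ultimately show ?thesis by (simp add: boards_def)
qed

lemma act_act: "C \<subseteq> grid k l \<Longrightarrow> act_board k l g (act_board k l g C) = C"
proof -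
  assume sub: "C \<subseteq> grid k l"
  have e: "\<And>x. x \<in> C \<Longrightarrow> act_cell k l g (act_cell k l g x) = x" using sub act_invol by blast
  have "act_board k l g (act_board k l g C) = (\<lambda>x. act_cell k l g (act_cell k l g x)) ` C"
    by (simp add: act_board_def image_image)
  also have "\<dots> = (\<lambda>x. x) ` C" using e by (rule image_cong[OF refl])
  finally show ?thesis by simp
qed

lemma inHV: "g \<in> HV_group" by (cases g) (simp_all add: HV_group_def)

lemma stab_iff:
  assumes "B \<in> boards k l r" and "p = board_partition k l B"
  shows "g \<in> stab_group k l r p \<longleftrightarrow> (\<forall>R. p (sig g R) = p R)"
proof
  assume g: "g \<in> stab_group k l r p"
  have "B \<in> boards_with_partition k l r p" using assms by (simp add: boards_with_partition_def)
  hence "act_board k l g B \<in> boards_with_partition k l r p" using g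
    unfolding stab_group_def by blast
  hence 1: "board_partition k l (act_board k l g B) = p" by (simp add: boards_with_partition_def)
  have "B \<subseteq> grid k l" using assms(1) by (simp add: boards_def)
  hence "board_partition k l (act_board k l g B) = (\<lambda>R. p (sig g R))"
    using bp_act assms(2) by blast
  hence "(\<lambda>R. p (sig g R)) = p" using 1 by simp
  thus "\<forall>R. p (sig g R) = p R" by (simp add: fun_eq_iff)
next
  assume e: "\<forall>R. p (sig g R) = p R"
  hence e': "(\<lambda>R. p (sig g R)) = p" by (simp add: fun_eq_iff)
  have 1: "act_board k l g C \<in> boards_with_partition k l r p"
    if "C \<in> boards_with_partition k l r p" for C
  proof -
    have a: "C \<in> boards k l r" and b: "board_partition k l C = p" and c: "C \<subseteq> grid k l"
      using that by (auto simp: boards_with_partition_def boards_def)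
    have "board_partition k l (act_board k l g C) = (\<lambda>R. board_partition k l C (sig g R))"
      using bp_act[OF c] .
    hence "board_partition k l (act_board k l g C) = p" using b e' by simp
    moreover have "act_board k l g C \<in> boards k l r" using act_boards[OF a] .
    ultimately show ?thesis by (simp add: boards_with_partition_def)
  qed
  have "act_board k l g ` boards_with_partition k l r p = boards_with_partition k l r p"
  proof
    show "act_board k l g ` boards_with_partition k l r p \<subseteq> boards_with_partition k l r p"
      using 1 by blast
    show "boards_with_partition k l r p \<subseteq> act_board k l g ` boards_with_partition k l r p"
    proof
      fix C assume c: "C \<in> boards_with_partition k l r p"
      hence "C \<subseteq> grid k l" by (auto simp: boards_with_partition_def boards_def)
      hence "C = act_board k l g (act_board k l g C)" using act_act by blast
      thus "C \<in> act_board k l g ` boards_with_partition k l r p" using 1[OF c] by blast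
    qed
  qed
  thus "g \<in> stab_group k l r p" using inHV by (simp add: stab_group_def)
qed

lemma all_region: "(\<forall>R. P R) \<longleftrightarrow> P Lam1 \<and> P Lam2 \<and> P Lam3 \<and> P Lam4 \<and> P Del1 \<and> P Del2 \<and> P Del3 \<and> P Del4 \<and> P Ctr"
  apply (rule iffI)
   apply simp
  apply (intro allI)
  subgoal for R by (cases R) auto
  done


lemma divs: "4 div Suc (Suc 0) = (2::nat)" "4 div Suc 0 = (4::nat)" "4 div Suc (Suc (Suc (Suc 0))) = (1::nat)"
proof -
  show "4 div Suc (Suc 0) = (2::nat)" by (simp only: numeral_2_eq_2[symmetric])
  show "4 div Suc 0 = (4::nat)" by simp
  have "Suc (Suc (Suc (Suc 0))) = (4::nat)" by simp
  thus "4 div Suc (Suc (Suc (Suc 0))) = (1::nat)" by simp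
qed

lemma case5_aux:
  assumes a: "\<not> (L1 = L2 \<and> L2 = L3 \<and> L3 = L4 \<and> D1 = D3 \<and> D2 = D4) \<and>
    \<not> (L1 = L3 \<and> L2 < L3 \<and> L2 = L4 \<and> D1 = D3 \<and> D2 = D4) \<and>
    \<not> (L1 = L2 \<and> L3 = L4 \<and> D2 = D4 \<and> (L2 = L3 \<longrightarrow> D1 \<noteq> D3)) \<and>
    \<not> (L1 = L4 \<and> L2 = L3 \<and> D1 = D3 \<and> (L1 = L2 \<longrightarrow> D2 \<noteq> (D4::nat)))" and n: "L1 \<ge> (L2::nat)"
  shows "\<not> (L1 = L4 \<and> L2 = L3 \<and> D1 = D3)" "\<not>(L1 = L2 \<and> L3 = L4 \<and> D2 = D4)" "\<not>(L1 = L3 \<and> L2 = L4 \<and> D1 = D3 \<and> D2 = D4)"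
proof -
  show "\<not> (L1 = L4 \<and> L2 = L3 \<and> D1 = D3)" using a by (smt (verit))
  show "\<not>(L1 = L2 \<and> L3 = L4 \<and> D2 = D4)" using a by (smt (verit))
  show "\<not>(L1 = L3 \<and> L2 = L4 \<and> D1 = D3 \<and> D2 = D4)"
  proof
    assume h: "L1 = L3 \<and> L2 = L4 \<and> D1 = D3 \<and> D2 = D4"
    hence "\<not> L2 < L3" using a by blast
    hence "L2 = L3" using h n by linarith
    thus False using h a by blast
  qed
qed

theorem corollary4p8:
  fixes k l r :: nat and B :: "(nat \<times> nat) set"
  assumes "k \<ge> 1" and "l \<ge> 1" and "k \<noteq> l"
    and "1 \<le> r" and "r \<le> (2*k+1) * (2*l+1)"
    and "B \<in> Bbar k l r"
  defines "p \<equiv> board_partition k l B"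
  defines "K \<equiv> stab_group k l r p"
  shows
   "(p Lam1 = p Lam2 \<and> p Lam2 = p Lam3 \<and> p Lam3 = p Lam4 \<and> p Del1 = p Del3 \<and> p Del2 = p Del4
       \<longrightarrow> K = {R0, H, V, R180} \<and> sym_index K = 1)
  \<and> (p Lam1 = p Lam3 \<and> p Lam3 > p Lam2 \<and> p Lam2 = p Lam4 \<and> p Del1 = p Del3 \<and> p Del2 = p Del4
       \<longrightarrow> K = {R0, R180} \<and> sym_index K = 2)
  \<and> (p Lam1 = p Lam2 \<and> p Lam3 = p Lam4 \<and> p Del2 = p Del4 \<and> (p Lam2 = p Lam3 \<longrightarrow> p Del1 \<noteq> p Del3)
       \<longrightarrow> K = {R0, V} \<and> sym_index K = 2)
  \<and> (p Lam1 = p Lam4 \<and> p Lam2 = p Lam3 \<and> p Del1 = p Del3 \<and> (p Lam1 = p Lam2 \<longrightarrow> p Del2 \<noteq> p Del4)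
       \<longrightarrow> K = {R0, H} \<and> sym_index K = 2)
  \<and> (\<not> (p Lam1 = p Lam2 \<and> p Lam2 = p Lam3 \<and> p Lam3 = p Lam4 \<and> p Del1 = p Del3 \<and> p Del2 = p Del4)
     \<and> \<not> (p Lam1 = p Lam3 \<and> p Lam3 > p Lam2 \<and> p Lam2 = p Lam4 \<and> p Del1 = p Del3 \<and> p Del2 = p Del4)
     \<and> \<not> (p Lam1 = p Lam2 \<and> p Lam3 = p Lam4 \<and> p Del2 = p Del4 \<and> (p Lam2 = p Lam3 \<longrightarrow> p Del1 \<noteq> p Del3))
     \<and> \<not> (p Lam1 = p Lam4 \<and> p Lam2 = p Lam3 \<and> p Del1 = p Del3 \<and> (p Lam1 = p Lam2 \<longrightarrow> p Del2 \<noteq> p Del4))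
       \<longrightarrow> K = {R0} \<and> sym_index K = 4)"
proof -
  have Bb: "B \<in> boards k l r" and nP: "normalized_partition p"
    using assms(6) by (auto simp: Bbar_def p_def)
  have mem: "\<And>g. g \<in> K \<longleftrightarrow> (\<forall>R. p (sig g R) = p R)"
    using stab_iff[OF Bb] by (simp add: K_def p_def)
  have R0: "R0 \<in> K" by (simp add: mem)
  define cH where "cH = (p Lam1 = p Lam4 \<and> p Lam2 = p Lam3 \<and> p Del1 = p Del3)"
  define cV where "cV = (p Lam1 = p Lam2 \<and> p Lam3 = p Lam4 \<and> p Del2 = p Del4)"
  define cR where "cR = (p Lam1 = p Lam3 \<and> p Lam2 = p Lam4 \<and> p Del1 = p Del3 \<and> p Del2 = p Del4)"
  have Hm: "H \<in> K \<longleftrightarrow> cH"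
    unfolding mem all_region cH_def by simp argo
  have Vm: "V \<in> K \<longleftrightarrow> cV"
    unfolding mem all_region cV_def by simp argo
  have Rm: "R180 \<in> K \<longleftrightarrow> cR"
    unfolding mem all_region cR_def by simp argo
  have Kc: "K = {R0} \<union> (if cH then {H} else {}) \<union> (if cV then {V} else {}) \<union> (if cR then {R180} else {})"
  proof (rule set_eqI)
    fix g show "g \<in> K \<longleftrightarrow> g \<in> {R0} \<union> (if cH then {H} else {}) \<union> (if cV then {V} else {}) \<union> (if cR then {R180} else {})"
      using R0 Hm Vm Rm by (cases g) auto
  qed
  have c4: "card HV_group = 4" by (simp add: HV_group_def)
  have n: "p Lam1 \<ge> p Lam2" using nP by (simp add: normalized_partition_def)
  have i0: "(p Lam1 = p Lam2 \<and> p Lam2 = p Lam3 \<and> p Lam3 = p Lam4 \<and> p Del1 = p Del3 \<and> p Del2 = p Del4) \<longrightarrow> K = {R0, H, V, R180} \<and> sym_index K = 1"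
    unfolding sym_index_def c4 Kc
  proof
    assume "p Lam1 = p Lam2 \<and> p Lam2 = p Lam3 \<and> p Lam3 = p Lam4 \<and> p Del1 = p Del3 \<and> p Del2 = p Del4"
    hence "cH" "cV" "cR" unfolding cH_def cV_def cR_def by auto
    thus "{R0} \<union> (if cH then {H} else {}) \<union> (if cV then {V} else {}) \<union> (if cR then {R180} else {}) = {R0, H, V, R180} \<and>
    4 div card ({R0} \<union> (if cH then {H} else {}) \<union> (if cV then {V} else {}) \<union> (if cR then {R180} else {})) = 1"
      by (auto simp: divs)
  qed
  have i1: "(p Lam1 = p Lam3 \<and> p Lam2 < p Lam3 \<and> p Lam2 = p Lam4 \<and> p Del1 = p Del3 \<and> p Del2 = p Del4) \<longrightarrow> K = {R0, R180} \<and> sym_index K = 2"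
    unfolding sym_index_def c4 Kc
  proof
    assume "p Lam1 = p Lam3 \<and> p Lam2 < p Lam3 \<and> p Lam2 = p Lam4 \<and> p Del1 = p Del3 \<and> p Del2 = p Del4"
    hence "\<not>cH" "\<not>cV" "cR" unfolding cH_def cV_def cR_def by auto
    thus "{R0} \<union> (if cH then {H} else {}) \<union> (if cV then {V} else {}) \<union> (if cR then {R180} else {}) = {R0, R180} \<and>
    4 div card ({R0} \<union> (if cH then {H} else {}) \<union> (if cV then {V} else {}) \<union> (if cR then {R180} else {})) = 2"
      by (auto simp: divs)
  qed
  have i2: "(p Lam1 = p Lam2 \<and> p Lam3 = p Lam4 \<and> p Del2 = p Del4 \<and> (p Lam2 = p Lam3 \<longrightarrow> p Del1 \<noteq> p Del3)) \<longrightarrow> K = {R0, V} \<and> sym_index K = 2"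
    unfolding sym_index_def c4 Kc
  proof
    assume "p Lam1 = p Lam2 \<and> p Lam3 = p Lam4 \<and> p Del2 = p Del4 \<and> (p Lam2 = p Lam3 \<longrightarrow> p Del1 \<noteq> p Del3)"
    hence "\<not>cH" "cV" "\<not>cR" unfolding cH_def cV_def cR_def by auto
    thus "{R0} \<union> (if cH then {H} else {}) \<union> (if cV then {V} else {}) \<union> (if cR then {R180} else {}) = {R0, V} \<and>
    4 div card ({R0} \<union> (if cH then {H} else {}) \<union> (if cV then {V} else {}) \<union> (if cR then {R180} else {})) = 2"
      by (auto simp: divs)
  qed
  have i3: "(p Lam1 = p Lam4 \<and> p Lam2 = p Lam3 \<and> p Del1 = p Del3 \<and> (p Lam1 = p Lam2 \<longrightarrow> p Del2 \<noteq> p Del4)) \<longrightarrow> K = {R0, H} \<and> sym_index K = 2"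
    unfolding sym_index_def c4 Kc
  proof
    assume "p Lam1 = p Lam4 \<and> p Lam2 = p Lam3 \<and> p Del1 = p Del3 \<and> (p Lam1 = p Lam2 \<longrightarrow> p Del2 \<noteq> p Del4)"
    hence "cH" "\<not>cV" "\<not>cR" unfolding cH_def cV_def cR_def by auto
    thus "{R0} \<union> (if cH then {H} else {}) \<union> (if cV then {V} else {}) \<union> (if cR then {R180} else {}) = {R0, H} \<and>
    4 div card ({R0} \<union> (if cH then {H} else {}) \<union> (if cV then {V} else {}) \<union> (if cR then {R180} else {})) = 2"
      by (auto simp: divs)
  qed
  have i4: "(\<not> (p Lam1 = p Lam2 \<and> p Lam2 = p Lam3 \<and> p Lam3 = p Lam4 \<and> p Del1 = p Del3 \<and> p Del2 = p Del4) \<and>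
    \<not> (p Lam1 = p Lam3 \<and> p Lam2 < p Lam3 \<and> p Lam2 = p Lam4 \<and> p Del1 = p Del3 \<and> p Del2 = p Del4) \<and>
    \<not> (p Lam1 = p Lam2 \<and> p Lam3 = p Lam4 \<and> p Del2 = p Del4 \<and> (p Lam2 = p Lam3 \<longrightarrow> p Del1 \<noteq> p Del3)) \<and>
    \<not> (p Lam1 = p Lam4 \<and> p Lam2 = p Lam3 \<and> p Del1 = p Del3 \<and> (p Lam1 = p Lam2 \<longrightarrow> p Del2 \<noteq> p Del4))) \<longrightarrow> K = {R0} \<and> sym_index K = 4"
    unfolding sym_index_def c4 Kc
  proof
    assume a: "\<not> (p Lam1 = p Lam2 \<and> p Lam2 = p Lam3 \<and> p Lam3 = p Lam4 \<and> p Del1 = p Del3 \<and> p Del2 = p Del4) \<and>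
    \<not> (p Lam1 = p Lam3 \<and> p Lam2 < p Lam3 \<and> p Lam2 = p Lam4 \<and> p Del1 = p Del3 \<and> p Del2 = p Del4) \<and>
    \<not> (p Lam1 = p Lam2 \<and> p Lam3 = p Lam4 \<and> p Del2 = p Del4 \<and> (p Lam2 = p Lam3 \<longrightarrow> p Del1 \<noteq> p Del3)) \<and>
    \<not> (p Lam1 = p Lam4 \<and> p Lam2 = p Lam3 \<and> p Del1 = p Del3 \<and> (p Lam1 = p Lam2 \<longrightarrow> p Del2 \<noteq> p Del4))"
    note cc = case5_aux[OF a n]
    have "\<not>cH" using cc(1) unfolding cH_def .
    moreover have "\<not>cV" using cc(2) unfolding cV_def .
    moreover have "\<not>cR" using cc(3) unfolding cR_def .
    ultimately show "{R0} \<union> (if cH then {H} else {}) \<union> (if cV then {V} else {}) \<union> (if cR then {R180} else {}) = {R0} \<and>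
    4 div card ({R0} \<union> (if cH then {H} else {}) \<union> (if cV then {V} else {}) \<union> (if cR then {R180} else {})) = 4"
      by (auto simp: divs)
  qed
  show ?thesis using i0 i1 i2 i3 i4 by blast
qed

end
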